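(* Let $f_1,\dots,f_n$ be monotone linear functions and $\sigma$ a permutation of $[n]$. Then $f^\sigma<\min\{f^{\sigma_1},f^{\sigma_{n-1}}\}\ \Rightarrow\ \theta(f^\sigma)+\pi\in(\theta(f_{\sigma(n)}),\theta(f_{\sigma(1)}))_{2\pi}$, and $f^\sigma>\max\{f^{\sigma_1},f^{\sigma_{n-1}}\}\ \Rightarrow\ \theta(f^\sigma)\in(\theta(f_{\sigma(n)}),\theta(f_{\sigma(1)}))_{2\pi}$.
   Context: A linear function is $f(x)=ax+b$; monotone means $a>0$. $\vec f=(b,1-a)^\top$ and $\theta(f)\in[0,2\pi)$ is its polar angle ($\bot$ if $\vec f=0$). $(\theta_1,\theta_2)_{2\pi}=\{\theta\in(\lambda_1,\lambda_2)\mid\lambda_1-\theta_1,\lambda_2-\theta_2\in2\pi\mathbb{Z},\ \lambda_2-\lambda_1\in[0,2\pi)\}$, membership being taken modulo $2\pi$. For a permutation $\sigma$ of $[n]$, $f^\sigma=f_{\sigma(n)}\circ\cdots\circ f_{\sigma(1)}$; for $k\in\{0,\dots,n-1\}$ the $k$-shift $\sigma_k$ is defined by $\sigma_k(i)=\sigma(i+k)$ for $i\le n-k$ and $\sigma_k(i)=\sigma(i+k-n)$ for $i>n-k$, so that $f^{\sigma_k}=f_{\sigma(k)}\circ\cdots\circ f_{\sigma(1)}\circ f_{\sigma(n)}\circ\cdots\circ f_{\sigma(k+1)}$. Inequalities between functions are pointwise (for all $x$). *)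

theory Defs
  imports Complex_Main "HOL-Combinatorics.Permutations"
begin

definition monotone_linear :: "(real \<Rightarrow> real) \<Rightarrow> bool" where
  "monotone_linear g \<longleftrightarrow> (\<exists>a b. a > 0 \<and> g = (\<lambda>x. a * x + b))"

definition lin_coeffs :: "(real \<Rightarrow> real) \<Rightarrow> real \<times> real" where
  "lin_coeffs g = (THE p. \<forall>x. g x = fst p * x + snd p)"

definition lin_vec :: "(real \<Rightarrow> real) \<Rightarrow> real \<times> real" where
  "lin_vec g = (snd (lin_coeffs g), 1 - fst (lin_coeffs g))"

text \<open>Polar angle in [0, 2 pi) of the vector of g; None encodes bottom (zero vector).\<close>
definition theta :: "(real \<Rightarrow> real) \<Rightarrow> real option" where
  "theta g = (if lin_vec g = (0, 0) then None
     else Some (THE t. 0 \<le> t \<and> t < 2 * pi \<and>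
        (\<exists>r > 0. lin_vec g = (r * cos t, r * sin t))))"

text \<open>The open arc (t1, t2)_{2 pi}, with membership modulo 2 pi.\<close>
definition arc2pi :: "real \<Rightarrow> real \<Rightarrow> real set" where
  "arc2pi t1 t2 = {t. \<exists>l1 l2 (k1::int) (k2::int) (m::int).
      l1 = t1 + 2 * pi * of_int k1 \<and> l2 = t2 + 2 * pi * of_int k2 \<and>
      0 \<le> l2 - l1 \<and> l2 - l1 < 2 * pi \<and>
      l1 < t + 2 * pi * of_int m \<and> t + 2 * pi * of_int m < l2}"

fun seq_comp :: "(nat \<Rightarrow> real \<Rightarrow> real) \<Rightarrow> nat \<Rightarrow> real \<Rightarrow> real" where
  "seq_comp g 0 = id"
| "seq_comp g (Suc k) = g (Suc k) \<circ> seq_comp g k"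

definition perm_comp :: "(nat \<Rightarrow> real \<Rightarrow> real) \<Rightarrow> (nat \<Rightarrow> nat) \<Rightarrow> nat \<Rightarrow> real \<Rightarrow> real" where
  "perm_comp f \<sigma> n = seq_comp (\<lambda>i. f (\<sigma> i)) n"

definition kshift :: "(nat \<Rightarrow> nat) \<Rightarrow> nat \<Rightarrow> nat \<Rightarrow> nat \<Rightarrow> nat" where
  "kshift \<sigma> n k i = (if i \<le> n - k then \<sigma> (i + k) else \<sigma> (i + k - n))"

end

theory Submission imports Defs begin

lemma lin_coeffs_affine: "lin_coeffs (\<lambda>x. a*x+b) = (a,b)"
  unfolding lin_coeffs_def
proof (rule the_equality)
  show "\<forall>x. a * x + b = fst (a, b) * x + snd (a, b)" by simp
next
  fix p assume h: "\<forall>x. a * x + b = fst p * x + snd p"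
  from h[rule_format, of 0] have 1: "b = snd p" by simp
  from h[rule_format, of 1] 1 have "a = fst p" by simp
  with 1 show "p = (a,b)" by (simp add: prod_eq_iff)
qed

lemma lin_vec_affine: "lin_vec (\<lambda>x. a*x+b) = (b, 1-a)"
  by (simp add: lin_vec_def lin_coeffs_affine)

lemma polar_unique:
  assumes "r > 0" "r' > 0" "0 \<le> t" "t < 2*pi" "0 \<le> t'" "t' < 2*pi"
    and "(r * cos t, r * sin t) = (r' * cos t', r' * sin t')"
  shows "t = t'"
proof -
  have e1: "r * cos t = r' * cos t'" and e2: "r * sin t = r' * sin t'" using assms(7) by auto
  have "(r * cos t)^2 + (r * sin t)^2 = (r' * cos t')^2 + (r' * sin t')^2" using e1 e2 by simp
  hence "r^2 = r'^2" by (simp add: power_mult_distrib flip: distrib_left)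
  hence rr: "r = r'" using assms(1,2) by (simp add: power2_eq_iff)
  have "cos t = cos t'" "sin t = sin t'" using e1 e2 rr assms(1) by auto
  then obtain n :: int where n: "t = t' + 2*pi*n" using sin_cos_eq_iff by metis
  have "2*pi*n < 2*pi*1" "2*pi*(-1) < 2*pi*n" using n assms(3-6) by linarith+
  hence "real_of_int n < 1" "-1 < real_of_int n"
    using mult_less_cancel_left_pos[of "2*pi" "real_of_int n" 1] mult_less_cancel_left_pos[of "2*pi" "-1" "real_of_int n"]
    by simp_all
  hence "n < 1" "-1 < n" by linarith+
  hence "n = 0" by simp
  thus ?thesis using n by simp
qed

lemma theta_polar:
  assumes "lin_vec g \<noteq> (0,0)"
  shows "\<exists>t r. theta g = Some t \<and> r > 0 \<and> lin_vec g = (r * cos t, r * sin t)"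
proof -
  obtain x y where xy: "lin_vec g = (x,y)" by (cases "lin_vec g")
  define r where "r = sqrt (x^2+y^2)"
  have "x \<noteq> 0 \<or> y \<noteq> 0" using assms xy by auto
  hence "x^2+y^2 > 0" by (metis sum_power2_gt_zero_iff)
  hence r: "r > 0" unfolding r_def by (rule real_sqrt_gt_zero)
  have r2: "r^2 = x^2+y^2" unfolding r_def using \<open>x^2+y^2 > 0\<close> by simp
  have "(x/r)^2 + (y/r)^2 = (x^2+y^2)/r^2" by (simp add: power_divide add_divide_distrib)
  also have "\<dots> = 1" using r2 \<open>x^2+y^2 > 0\<close> by (metis divide_self less_irrefl)
  finally have "(x/r)^2 + (y/r)^2 = 1" .
  then obtain t where t: "0 \<le> t" "t < 2*pi" "x/r = cos t" "y/r = sin t"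
    by (rule sincos_total_2pi)
  have v: "lin_vec g = (r * cos t, r * sin t)" using xy t(3,4) r by (auto simp: field_simps)
  have P: "0 \<le> t \<and> t < 2 * pi \<and> (\<exists>r > 0. lin_vec g = (r * cos t, r * sin t))"
    using t v r by auto
  have "(THE t. 0 \<le> t \<and> t < 2 * pi \<and> (\<exists>r > 0. lin_vec g = (r * cos t, r * sin t))) = t"
  proof (rule the_equality)
    show "0 \<le> t \<and> t < 2 * pi \<and> (\<exists>r > 0. lin_vec g = (r * cos t, r * sin t))" by (rule P)
  next
    fix t' assume "0 \<le> t' \<and> t' < 2 * pi \<and> (\<exists>r > 0. lin_vec g = (r * cos t', r * sin t'))"
    then obtain r' where "0 \<le> t'" "t' < 2*pi" "r' > 0" "lin_vec g = (r' * cos t', r' * sin t')" by auto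
    thus "t' = t" using polar_unique[of r' r t' t] t r v by auto
  qed
  hence "theta g = Some t" using assms by (simp add: theta_def)
  thus ?thesis using r v by blast
qed

lemma sin_rep:
  assumes "sin d > 0"
  shows "\<exists>\<alpha> (m::int). d = \<alpha> + 2*pi*m \<and> 0 < \<alpha> \<and> \<alpha> < pi"
proof -
  define m where "m = floor (d / (2*pi))"
  define \<alpha> where "\<alpha> = d - 2*pi*m"
  have "m \<le> d/(2*pi)" "d/(2*pi) < m + 1" unfolding m_def by linarith+
  hence a0: "0 \<le> \<alpha>" "\<alpha> < 2*pi" unfolding \<alpha>_def by (auto simp: field_simps)
  have "sin d = sin \<alpha>" unfolding \<alpha>_def by (simp add: sin_diff)
  hence "sin \<alpha> > 0" using assms by simp
  hence "\<alpha> < pi" using sin_le_zero[of \<alpha>] a0 by force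
  moreover have "\<alpha> \<noteq> 0" using \<open>sin \<alpha> > 0\<close> by auto
  ultimately show ?thesis using a0 \<alpha>_def by (intro exI[of _ \<alpha>] exI[of _ m]) auto
qed

lemma arc_lemma:
  assumes "sin (s - t1) > 0" "sin (t2 - s) > 0"
  shows "s \<in> arc2pi t1 t2"
proof -
  obtain \<alpha> m1 where a: "s - t1 = \<alpha> + 2*pi*of_int m1" "0 < \<alpha>" "\<alpha> < pi" using sin_rep[OF assms(1)] by blast
  obtain \<beta> m2 where b: "t2 - s = \<beta> + 2*pi*of_int m2" "0 < \<beta>" "\<beta> < pi" using sin_rep[OF assms(2)] by blast
  show ?thesis unfolding arc2pi_def
    apply (rule CollectI)
    apply (rule exI[of _ t1], rule exI[of _ "t1+\<alpha>+\<beta>"], rule exI[of _ "0::int"], rule exI[of _ "-(m1+m2)::int"], rule exI[of _ "-m1::int"])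
    using a b by (auto simp: algebra_simps)
qed

lemma seq_comp_cong: "(\<forall>i\<in>{1..k}. g i = g' i) \<Longrightarrow> seq_comp g k = seq_comp g' k"
  by (induction k) auto

lemma seq_comp_shift: "seq_comp g (Suc k) = seq_comp (\<lambda>i. g (Suc i)) k \<circ> g 1"
  by (induction k) (simp_all only: seq_comp.simps comp_assoc id_comp comp_id One_nat_def)

lemma seq_comp_mono: "(\<forall>i\<in>{1..k}. monotone_linear (g i)) \<Longrightarrow> monotone_linear (seq_comp g k)"
proof (induction k)
  case 0
  show ?case unfolding monotone_linear_def by (rule exI[of _ 1], rule exI[of _ 0]) (auto simp: id_def)
next
  case (Suc k)
  then obtain a b where ab: "a > 0" "seq_comp g k = (\<lambda>x. a*x+b)" unfolding monotone_linear_def by auto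
  from Suc.prems have "monotone_linear (g (Suc k))" by auto
  then obtain c d where cd: "c > 0" "g (Suc k) = (\<lambda>x. c*x+d)" unfolding monotone_linear_def by auto
  show ?case unfolding monotone_linear_def using ab cd
    by (intro exI[of _ "c*a"] exI[of _ "c*b+d"]) (auto simp: algebra_simps)
qed

lemma cross_polar:
  "(r*cos a)*(q*sin b) - (r*sin a)*(q*cos b) = r*q*sin(b-a)" for r q a b :: real
  unfolding sin_diff by (simp add: algebra_simps)

lemma finish:
  assumes F: "lin_vec F = (p1,p2)" and g: "lin_vec g = (q1,q2)" and K: "lin_vec K = (k1,k2)"
    and c1: "c1 = p1*q2 - p2*q1" and c2: "c2 = k1*q2 - k2*q1" and "c1 \<noteq> 0" "c2 \<noteq> 0"
  shows "\<exists>t t1 t2 rF rg rK. theta g = Some t \<and> theta F = Some t1 \<and> theta K = Some t2 \<and>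
     rF > 0 \<and> rg > 0 \<and> rK > 0 \<and> c1 = rF*rg*sin(t-t1) \<and> c2 = rK*rg*sin(t-t2)"
proof -
  have "lin_vec F \<noteq> (0,0)" using F c1 \<open>c1 \<noteq> 0\<close> by auto
  then obtain t1 rF where hF: "theta F = Some t1" "rF > 0" "lin_vec F = (rF*cos t1, rF*sin t1)"
    using theta_polar by blast
  have "lin_vec g \<noteq> (0,0)" using g c1 \<open>c1 \<noteq> 0\<close> by auto
  then obtain t rg where hg: "theta g = Some t" "rg > 0" "lin_vec g = (rg*cos t, rg*sin t)"
    using theta_polar by blast
  have "lin_vec K \<noteq> (0,0)" using K c2 \<open>c2 \<noteq> 0\<close> by auto
  then obtain t2 rK where hK: "theta K = Some t2" "rK > 0" "lin_vec K = (rK*cos t2, rK*sin t2)"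
    using theta_polar by blast
  have "c1 = rF*rg*sin(t-t1)" using c1 F g hF(3) hg(3) cross_polar[of rF t1 rg t] by auto
  moreover have "c2 = rK*rg*sin(t-t2)" using c2 K g hK(3) hg(3) cross_polar[of rK t2 rg t] by auto
  ultimately show ?thesis using hF hg hK by blast
qed

lemma pos_mult_sign:
  fixes r q s :: real
  assumes "r > 0" "q > 0" shows "(r*q*s < 0 \<longleftrightarrow> s < 0) \<and> (r*q*s > 0 \<longleftrightarrow> s > 0)"
proof -
  have "r*q > 0" using assms by simp
  thus ?thesis by (metis mult_less_0_iff zero_less_mult_iff not_less_iff_gr_or_eq)
qed

theorem mainTheorem10:
  fixes f :: "nat \<Rightarrow> real \<Rightarrow> real" and \<sigma> :: "nat \<Rightarrow> nat" and n :: nat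
  assumes n2: "n \<ge> 2"
    and mono: "\<forall>i\<in>{1..n}. monotone_linear (f i)"
    and perm: "\<sigma> permutes {1..n}"
  shows "((\<forall>x. perm_comp f \<sigma> n x < min (perm_comp f (kshift \<sigma> n 1) n x)
                                         (perm_comp f (kshift \<sigma> n (n - 1)) n x))
           \<longrightarrow> (\<exists>t t1 t2. theta (perm_comp f \<sigma> n) = Some t \<and>
                   theta (f (\<sigma> n)) = Some t1 \<and> theta (f (\<sigma> 1)) = Some t2 \<and>
                   t + pi \<in> arc2pi t1 t2)) \<and>
         ((\<forall>x. perm_comp f \<sigma> n x > max (perm_comp f (kshift \<sigma> n 1) n x)
                                         (perm_comp f (kshift \<sigma> n (n - 1)) n x))
           \<longrightarrow> (\<exists>t t1 t2. theta (perm_comp f \<sigma> n) = Some t \<and>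
                   theta (f (\<sigma> n)) = Some t1 \<and> theta (f (\<sigma> 1)) = Some t2 \<and>
                   t \<in> arc2pi t1 t2))"
proof -
  define h where "h = (\<lambda>i. f (\<sigma> i))"
  obtain m where nm: "n = Suc m" and m1: "m \<ge> 1" using n2 by (cases n) auto
  have mh: "\<forall>i\<in>{1..n}. monotone_linear (h i)"
    using mono permutes_in_image[OF perm] unfolding h_def by blast
  define F where "F = h n"
  define G where "G = seq_comp h m"
  define H where "H = seq_comp (\<lambda>i. h (Suc i)) m"
  define K where "K = h 1"
  define P where "P = perm_comp f \<sigma> n"
  have P1: "P = F \<circ> G" unfolding P_def F_def G_def perm_comp_def h_def nm by simp
  have P2: "P = H \<circ> K" unfolding P_def H_def K_def perm_comp_def h_def nm by (rule seq_comp_shift)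
  have P3: "perm_comp f (kshift \<sigma> n (n - 1)) n = G \<circ> F"
  proof -
    have "perm_comp f (kshift \<sigma> n (n - 1)) n =
       seq_comp (\<lambda>i. f (kshift \<sigma> n (n - 1) (Suc i))) m \<circ> f (kshift \<sigma> n (n - 1) 1)"
      unfolding perm_comp_def nm by (rule seq_comp_shift)
    also have "seq_comp (\<lambda>i. f (kshift \<sigma> n (n - 1) (Suc i))) m = G"
      unfolding G_def by (rule seq_comp_cong) (auto simp: kshift_def h_def nm)
    also have "f (kshift \<sigma> n (n - 1) 1) = F" unfolding F_def h_def kshift_def using nm by simp
    finally show ?thesis .
  qed
  have P4: "perm_comp f (kshift \<sigma> n 1) n = K \<circ> H"
  proof -
    have "perm_comp f (kshift \<sigma> n 1) n =
       f (kshift \<sigma> n 1 (Suc m)) \<circ> seq_comp (\<lambda>i. f (kshift \<sigma> n 1 i)) m"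
      unfolding perm_comp_def nm by simp
    also have "seq_comp (\<lambda>i. f (kshift \<sigma> n 1 i)) m = H"
      unfolding H_def by (rule seq_comp_cong) (auto simp: kshift_def h_def nm)
    also have "f (kshift \<sigma> n 1 (Suc m)) = K" unfolding K_def h_def kshift_def using nm by simp
    finally show ?thesis .
  qed
  have mF: "monotone_linear F" unfolding F_def using mh nm by auto
  have mK: "monotone_linear K" unfolding K_def using mh nm by auto
  have mG: "monotone_linear G" unfolding G_def by (rule seq_comp_mono) (use mh nm in auto)
  have mH: "monotone_linear H" unfolding H_def by (rule seq_comp_mono) (use mh nm in auto)
  obtain aF bF where F: "aF > 0" "F = (\<lambda>x. aF*x+bF)" using mF unfolding monotone_linear_def by auto
  obtain aG bG where G: "aG > 0" "G = (\<lambda>x. aG*x+bG)" using mG unfolding monotone_linear_def by auto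
  obtain aH bH where H: "aH > 0" "H = (\<lambda>x. aH*x+bH)" using mH unfolding monotone_linear_def by auto
  obtain aK bK where K: "aK > 0" "K = (\<lambda>x. aK*x+bK)" using mK unfolding monotone_linear_def by auto
  have Pf: "P = (\<lambda>x. (aF*aG)*x + (aF*bG+bF))" unfolding P1 F G by (auto simp: algebra_simps)
  have PH: "\<And>x. P x = aH*(aK*x+bK)+bH" unfolding P2 H K by simp
  have e0: "aF*bG+bF = aH*bK+bH" using PH[of 0] Pf by simp
  have e1: "aF*aG = aH*aK" using PH[of 1] Pf e0 by (simp add: algebra_simps)
  have P0: "P 0 = aF*bG+bF" using Pf by simp
  have GF0: "perm_comp f (kshift \<sigma> n (n - 1)) n 0 = aG*bF+bG" unfolding P3 F G by simp
  have KH0: "perm_comp f (kshift \<sigma> n 1) n 0 = aK*bH+bK" unfolding P4 H K by simp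
  have vF: "lin_vec (f (\<sigma> n)) = (bF, 1-aF)"
    using F(2) unfolding F_def h_def by (simp add: lin_vec_affine)
  have vK: "lin_vec (f (\<sigma> 1)) = (bK, 1-aK)"
    using K(2) unfolding K_def h_def by (simp add: lin_vec_affine)
  have vg: "lin_vec P = (aF*bG+bF, 1-aF*aG)" unfolding Pf by (rule lin_vec_affine)
  define c1 where "c1 = bF*(1-aF*aG) - (1-aF)*(aF*bG+bF)"
  define c2 where "c2 = bK*(1-aF*aG) - (1-aK)*(aF*bG+bF)"
  have C1: "c1 = aF*((aF*bG+bF) - (aG*bF+bG))" unfolding c1_def by (simp add: algebra_simps)
  have C2: "c2 = (aK*bH+bK) - (aF*bG+bF)" unfolding c2_def e1 e0 by (simp add: algebra_simps)
  show ?thesis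
  proof (intro conjI impI)
    assume A: "\<forall>x. perm_comp f \<sigma> n x < min (perm_comp f (kshift \<sigma> n 1) n x)
                                         (perm_comp f (kshift \<sigma> n (n - 1)) n x)"
    from A[rule_format, of 0] have "P 0 < aK*bH+bK" "P 0 < aG*bF+bG"
      using GF0 KH0 unfolding P_def by auto
    hence s1: "c1 < 0" and s2: "c2 > 0" unfolding C1 C2 P0 using F(1)
      by (auto simp: mult_less_0_iff)
    obtain t t1 t2 rF rg rK where T: "theta P = Some t" "theta (f (\<sigma> n)) = Some t1"
      "theta (f (\<sigma> 1)) = Some t2" "rF > 0" "rg > 0" "rK > 0"
      "c1 = rF*rg*sin(t-t1)" "c2 = rK*rg*sin(t-t2)"
      using finish[OF vF vg vK c1_def c2_def] s1 s2 by force
    have "sin (t - t1) < 0" using s1 T(4,5,7) pos_mult_sign by metis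
    moreover have "sin (t - t2) > 0" using s2 T(5,6,8) pos_mult_sign by metis
    moreover have "sin (t2 - (t + pi)) = - sin (t2 - t)"
      using sin_diff[of "t2 - t" pi] by (simp add: diff_diff_eq[symmetric])
    ultimately have "sin (t + pi - t1) > 0" "sin (t2 - (t + pi)) > 0"
      using sin_periodic_pi[of "t - t1"] sin_periodic_pi[of "t2 - t"] sin_minus[of "t - t2"]
      by (auto simp: algebra_simps)
    hence "t + pi \<in> arc2pi t1 t2" by (rule arc_lemma)
    thus "\<exists>t t1 t2. theta (perm_comp f \<sigma> n) = Some t \<and>
                   theta (f (\<sigma> n)) = Some t1 \<and> theta (f (\<sigma> 1)) = Some t2 \<and>
                   t + pi \<in> arc2pi t1 t2" using T(1-3) unfolding P_def by blast
  next
    assume A: "\<forall>x. perm_comp f \<sigma> n x > max (perm_comp f (kshift \<sigma> n 1) n x)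
                                         (perm_comp f (kshift \<sigma> n (n - 1)) n x)"
    from A[rule_format, of 0] have "P 0 > aK*bH+bK" "P 0 > aG*bF+bG"
      using GF0 KH0 unfolding P_def by auto
    hence s1: "c1 > 0" and s2: "c2 < 0" unfolding C1 C2 P0 using F(1)
      by (auto simp: zero_less_mult_iff)
    obtain t t1 t2 rF rg rK where T: "theta P = Some t" "theta (f (\<sigma> n)) = Some t1"
      "theta (f (\<sigma> 1)) = Some t2" "rF > 0" "rg > 0" "rK > 0"
      "c1 = rF*rg*sin(t-t1)" "c2 = rK*rg*sin(t-t2)"
      using finish[OF vF vg vK c1_def c2_def] s1 s2 by force
    have "sin (t - t1) > 0" using s1 T(4,5,7) pos_mult_sign by metis
    moreover have "sin (t - t2) < 0" using s2 T(5,6,8) pos_mult_sign by metis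
    ultimately have "sin (t - t1) > 0" "sin (t2 - t) > 0"
      using sin_minus[of "t - t2"] by (auto simp: algebra_simps)
    hence "t \<in> arc2pi t1 t2" by (rule arc_lemma)
    thus "\<exists>t t1 t2. theta (perm_comp f \<sigma> n) = Some t \<and>
                   theta (f (\<sigma> n)) = Some t1 \<and> theta (f (\<sigma> 1)) = Some t2 \<and>
                   t \<in> arc2pi t1 t2" using T(1-3) unfolding P_def by blast
  qed
qed

end
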